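(* Consider the lattice Boltzmann scheme described in the context, viewed formally as depending on the single parameter $\Delta t\to0$ (with $\lambda$, $e_j$, $M$, $G$, $s_k$ fixed). Define the conservation defect $$\theta^k=\partial_t m^k_{\rm eq}+\sum_{\beta=1}^d\sum_{j=0}^J M^k_j v_j^\beta\,\partial_\beta f^j_{\rm eq}=\sum_{j=0}^J M^k_j\Big(\partial_t f^j_{\rm eq}+\sum_{\beta=1}^d v_j^\beta\partial_\beta f^j_{\rm eq}\Big),\quad 0\le k\le J.$$ Then for $d+1\le k\le J$, $$m^k=m^k_{\rm eq}-\frac{\Delta t}{s_k}\theta^k+O(\Delta t^2),\qquad m^k_*=m^k_{\rm eq}-\Big(\frac1{s_k}-1\Big)\Delta t\,\theta^k+O(\Delta t^2),$$ and for $0\le j\le J$, $1\le\beta\le d$, $$\partial_\beta f^j_*=\partial_\beta f^j_{\rm eq}-\Delta t\sum_{k=d+1}^J\Big(\frac1{s_k}-1\Big)(M^{-1})^j_k\,\partial_\beta\theta^k+O(\Delta t^2).$$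
   Context: Let $d\ge1$ be the space dimension, $J\ge d$ an integer, and $e_0,\dots,e_J\in\mathbb{R}^d$ fixed vectors. Let $\Delta x>0$, $\Delta t>0$ with $\lambda=\Delta x/\Delta t$ fixed, and set $v_j=\lambda e_j$, with components $v_j^\alpha$. Let $M=(M^k_j)_{0\le k,j\le J}$ be a fixed invertible real matrix with $M^0_j=1$ and $M^\alpha_j=v_j^\alpha$ for $1\le\alpha\le d$; $(M^{-1})^j_k$ denotes the entries of its inverse. Let $G:\mathbb{R}^{d+1}\to\mathbb{R}^{J+1}$ be a fixed smooth map with $\sum_j G^j(W)=W^0$ and $\sum_j v_j^\alpha G^j(W)=W^\alpha$. Let $s_k\in(0,2]$, $d+1\le k\le J$, be fixed. The scheme: densities $f^j(x,t)$; moments $m^k=\sum_j M^k_j f^j$; $\rho=m^0$, $q^\alpha=m^\alpha$, $W=(\rho,q^1,\dots,q^d)$; $f^j_{\rm eq}=G^j(W)$, $m^k_{\rm eq}=\sum_j M^k_j f^j_{\rm eq}$. Collision: $m^i_*=m^i$ for $0\le i\le d$, $m^k_*=(1-s_k)m^k+s_k m^k_{\rm eq}$ for $k\ge d+1$; $f^j_*=\sum_k (M^{-1})^j_k m^k_*$. Advection: $f^j(x,t+\Delta t)=f^j_*(x-v_j\Delta t,t)$. Here $\partial_\beta=\partial/\partial x_\beta$. Formal framework: all quantities are smooth functions of $(x,t)$ satisfying these relations identically and are expanded by Taylor's formula in $\Delta t$; $O(\Delta t^n)$ denotes a remainder of order $\Delta t^n$ as $\Delta t\to0$, derivatives of remainders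 being of the same order. *)

theory Defs
  imports "HOL-Analysis.Analysis"
begin

definition dirD :: "'a::euclidean_space \<Rightarrow> ('a \<Rightarrow> real) \<Rightarrow> 'a \<Rightarrow> real" where
  "dirD b g y = deriv (\<lambda>s. g (y + s *\<^sub>R b)) 0"

definition iterD :: "'a::euclidean_space list \<Rightarrow> ('a \<Rightarrow> real) \<Rightarrow> 'a \<Rightarrow> real" where
  "iterD bs g = foldr dirD bs g"

definition smooth_fun :: "('a::euclidean_space \<Rightarrow> real) \<Rightarrow> bool" where
  "smooth_fun g \<longleftrightarrow> (\<forall>bs. set bs \<subseteq> Basis \<longrightarrow>
      continuous_on UNIV (iterD bs g) \<and>
      (\<forall>b\<in>Basis. \<forall>y. (\<lambda>s. iterD bs g (y + s *\<^sub>R b)) differentiable (at 0)))"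

definition bigO :: "nat \<Rightarrow> (real \<Rightarrow> 'a::euclidean_space \<Rightarrow> real) \<Rightarrow> bool" where
  "bigO n R \<longleftrightarrow> (\<forall>bs. set bs \<subseteq> Basis \<longrightarrow>
      (\<exists>C h0. 0 < h0 \<and> (\<forall>h y. 0 < h \<and> h \<le> h0 \<longrightarrow> \<bar>iterD bs (R h) y\<bar> \<le> C * h ^ n)))"

text \<open>Points of space-time are pairs p = (x, t) with x in R^d (type real^'d) and t real.\<close>

definition pt :: "((real^'d::finite) \<times> real \<Rightarrow> real) \<Rightarrow> (real^'d) \<times> real \<Rightarrow> real" where
  "pt g = dirD (0, 1) g"

definition px :: "'d::finite \<Rightarrow> ((real^'d) \<times> real \<Rightarrow> real) \<Rightarrow> (real^'d) \<times> real \<Rightarrow> real" where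
  "px \<beta> g = dirD (axis \<beta> 1, 0) g"

text \<open>Parameters: J (number of velocities minus one), M, Minv (its inverse), G, s,
  v (velocities v_j), iota (enumeration of the d space directions by 1..d, so that
  moment number alpha corresponds to direction iota alpha), f (densities f h j p).\<close>

definition mom :: "nat \<Rightarrow> (nat \<Rightarrow> nat \<Rightarrow> real) \<Rightarrow> (real \<Rightarrow> nat \<Rightarrow> (real^'d::finite) \<times> real \<Rightarrow> real)
    \<Rightarrow> real \<Rightarrow> nat \<Rightarrow> (real^'d) \<times> real \<Rightarrow> real" where
  "mom J M f h k p = (\<Sum>j\<le>J. M k j * f h j p)"

definition Wvar :: "nat \<Rightarrow> (nat \<Rightarrow> nat \<Rightarrow> real) \<Rightarrow> (nat \<Rightarrow> 'd::finite)
    \<Rightarrow> (real \<Rightarrow> nat \<Rightarrow> (real^'d) \<times> real \<Rightarrow> real) \<Rightarrow> real \<Rightarrow> (real^'d) \<times> real \<Rightarrow> real \<times> (real^'d)" where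
  "Wvar J M \<iota> f h p = (mom J M f h 0 p,
      (\<chi> \<beta>. mom J M f h (the_inv_into {1..CARD('d)} \<iota> \<beta>) p))"

definition feq :: "nat \<Rightarrow> (nat \<Rightarrow> nat \<Rightarrow> real) \<Rightarrow> (nat \<Rightarrow> real \<times> (real^'d::finite) \<Rightarrow> real)
    \<Rightarrow> (nat \<Rightarrow> 'd) \<Rightarrow> (real \<Rightarrow> nat \<Rightarrow> (real^'d) \<times> real \<Rightarrow> real)
    \<Rightarrow> real \<Rightarrow> nat \<Rightarrow> (real^'d) \<times> real \<Rightarrow> real" where
  "feq J M G \<iota> f h j p = G j (Wvar J M \<iota> f h p)"

definition meq :: "nat \<Rightarrow> (nat \<Rightarrow> nat \<Rightarrow> real) \<Rightarrow> (nat \<Rightarrow> real \<times> (real^'d::finite) \<Rightarrow> real)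
    \<Rightarrow> (nat \<Rightarrow> 'd) \<Rightarrow> (real \<Rightarrow> nat \<Rightarrow> (real^'d) \<times> real \<Rightarrow> real)
    \<Rightarrow> real \<Rightarrow> nat \<Rightarrow> (real^'d) \<times> real \<Rightarrow> real" where
  "meq J M G \<iota> f h k p = (\<Sum>j\<le>J. M k j * feq J M G \<iota> f h j p)"

definition mstar :: "nat \<Rightarrow> (nat \<Rightarrow> nat \<Rightarrow> real) \<Rightarrow> (nat \<Rightarrow> real \<times> (real^'d::finite) \<Rightarrow> real)
    \<Rightarrow> (nat \<Rightarrow> real) \<Rightarrow> (nat \<Rightarrow> 'd) \<Rightarrow> (real \<Rightarrow> nat \<Rightarrow> (real^'d) \<times> real \<Rightarrow> real)
    \<Rightarrow> real \<Rightarrow> nat \<Rightarrow> (real^'d) \<times> real \<Rightarrow> real" where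
  "mstar J M G s \<iota> f h k p =
     (if k \<le> CARD('d) then mom J M f h k p
      else (1 - s k) * mom J M f h k p + s k * meq J M G \<iota> f h k p)"

definition fstar :: "nat \<Rightarrow> (nat \<Rightarrow> nat \<Rightarrow> real) \<Rightarrow> (nat \<Rightarrow> nat \<Rightarrow> real)
    \<Rightarrow> (nat \<Rightarrow> real \<times> (real^'d::finite) \<Rightarrow> real)
    \<Rightarrow> (nat \<Rightarrow> real) \<Rightarrow> (nat \<Rightarrow> 'd) \<Rightarrow> (real \<Rightarrow> nat \<Rightarrow> (real^'d) \<times> real \<Rightarrow> real)
    \<Rightarrow> real \<Rightarrow> nat \<Rightarrow> (real^'d) \<times> real \<Rightarrow> real" where
  "fstar J M Minv G s \<iota> f h j p = (\<Sum>k\<le>J. Minv j k * mstar J M G s \<iota> f h k p)"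

definition theta :: "nat \<Rightarrow> (nat \<Rightarrow> nat \<Rightarrow> real) \<Rightarrow> (nat \<Rightarrow> real \<times> (real^'d::finite) \<Rightarrow> real)
    \<Rightarrow> (nat \<Rightarrow> real^'d) \<Rightarrow> (nat \<Rightarrow> 'd) \<Rightarrow> (real \<Rightarrow> nat \<Rightarrow> (real^'d) \<times> real \<Rightarrow> real)
    \<Rightarrow> real \<Rightarrow> nat \<Rightarrow> (real^'d) \<times> real \<Rightarrow> real" where
  "theta J M G v \<iota> f h k p = (\<Sum>j\<le>J. M k j *
      (pt (feq J M G \<iota> f h j) p + (\<Sum>\<beta>\<in>UNIV. v j $ \<beta> * px \<beta> (feq J M G \<iota> f h j) p)))"

end

theory Submission
  imports Defs
begin


lemma iterD_Nil[simp]: "iterD [] F = F" by (simp add: iterD_def)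
lemma iterD_Cons[simp]: "iterD (b#bs) F = dirD b (iterD bs F)" by (simp add: iterD_def)
lemma iterD_append: "iterD (bs@cs) F = iterD bs (iterD cs F)" by (simp add: iterD_def)

lemma smooth_iterD:
  assumes "smooth_fun F" "set cs \<subseteq> Basis"
  shows "smooth_fun (iterD cs F)"
  using assms unfolding smooth_fun_def by (auto simp: iterD_append[symmetric])

lemma smooth_dirD:
  assumes "smooth_fun F" "b \<in> Basis"
  shows "smooth_fun (dirD b F)"
  using smooth_iterD[OF assms(1), of "[b]"] assms(2) by simp

lemma dirD_has0:
  assumes "smooth_fun F" "b \<in> Basis"
  shows "((\<lambda>s. F (y + s *\<^sub>R b)) has_real_derivative dirD b F y) (at 0)"
proof -
  have "(\<lambda>s. iterD [] F (y + s *\<^sub>R b)) differentiable (at 0)"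
    using assms(1)[unfolded smooth_fun_def, rule_format, of "[]"] assms(2) by simp
  then show ?thesis unfolding dirD_def
    using DERIV_deriv_iff_real_differentiable by force
qed

lemma line_deriv:
  assumes "smooth_fun F" "b \<in> Basis"
  shows "((\<lambda>s. F (y + s *\<^sub>R b)) has_real_derivative dirD b F (y + s0 *\<^sub>R b)) (at s0)"
proof -
  have "((\<lambda>s. F ((y + s0 *\<^sub>R b) + s *\<^sub>R b)) has_real_derivative dirD b F (y + s0 *\<^sub>R b)) (at 0)"
    by (rule dirD_has0[OF assms])
  moreover have "(\<lambda>s. F ((y + s0 *\<^sub>R b) + s *\<^sub>R b)) = (\<lambda>s. (\<lambda>s. F (y + s *\<^sub>R b)) (s + s0))"
    by (simp add: algebra_simps)
  ultimately show ?thesis using DERIV_shift[of "\<lambda>s. F (y + s *\<^sub>R b)" _ 0 s0] by simp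
qed

lemma iterD_shift: "iterD bs (\<lambda>p. F (p + a)) = (\<lambda>p. iterD bs F (p + a))"
proof (induction bs)
  case Nil then show ?case by simp
next
  case (Cons b bs)
  show ?case by (rule ext) (simp add: Cons dirD_def algebra_simps)
qed

lemma smooth_shift:
  assumes "smooth_fun F" shows "smooth_fun (\<lambda>p. F (p + a))"
  unfolding smooth_fun_def iterD_shift
proof (intro allI impI conjI ballI)
  fix bs :: "'a list" assume bs: "set bs \<subseteq> Basis"
  have c: "continuous_on UNIV (iterD bs F)" using assms bs unfolding smooth_fun_def by blast
  show "continuous_on UNIV (\<lambda>p. iterD bs F (p + a))"
    by (rule continuous_on_compose2[OF c]) (auto intro!: continuous_intros)
  fix b y assume "b \<in> (Basis::'a set)"
  then have "(\<lambda>s. iterD bs F ((y + a) + s *\<^sub>R b)) differentiable (at 0)"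
    using assms bs unfolding smooth_fun_def by blast
  then show "(\<lambda>s. iterD bs F (y + s *\<^sub>R b + a)) differentiable (at 0)"
    by (simp add: algebra_simps)
qed

lemma iterD_zero: "iterD bs (\<lambda>p. 0) = (\<lambda>p. 0)"
  by (induction bs) (auto simp: dirD_def)

lemma smooth_zero: "smooth_fun (\<lambda>p. 0)"
  unfolding smooth_fun_def iterD_zero by auto

lemma iterD_add:
  assumes "smooth_fun F" "smooth_fun G" "set bs \<subseteq> Basis"
  shows "iterD bs (\<lambda>p. F p + G p) = (\<lambda>p. iterD bs F p + iterD bs G p)"
  using assms(3)
proof (induction bs)
  case Nil then show ?case by simp
next
  case (Cons b bs)
  then have b: "b \<in> Basis" and bs: "set bs \<subseteq> Basis" by auto
  show ?case
  proof (rule ext)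
    fix y
    have 1: "((\<lambda>s. iterD bs F (y + s *\<^sub>R b)) has_real_derivative dirD b (iterD bs F) y) (at 0)"
      by (rule dirD_has0[OF smooth_iterD[OF assms(1) bs] b])
    have 2: "((\<lambda>s. iterD bs G (y + s *\<^sub>R b)) has_real_derivative dirD b (iterD bs G) y) (at 0)"
      by (rule dirD_has0[OF smooth_iterD[OF assms(2) bs] b])
    show "iterD (b # bs) (\<lambda>p. F p + G p) y = iterD (b # bs) F y + iterD (b # bs) G y"
      using Cons.IH[OF bs] DERIV_imp_deriv[OF DERIV_add[OF 1 2]]
      by (simp add: dirD_def[of b "\<lambda>p. iterD bs F p + iterD bs G p"])
  qed
qed

lemma iterD_cmult:
  assumes "smooth_fun F" "set bs \<subseteq> Basis"
  shows "iterD bs (\<lambda>p. c * F p) = (\<lambda>p. c * iterD bs F p)"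
  using assms(2)
proof (induction bs)
  case Nil then show ?case by simp
next
  case (Cons b bs)
  then have b: "b \<in> Basis" and bs: "set bs \<subseteq> Basis" by auto
  show ?case
  proof (rule ext)
    fix y
    have 1: "((\<lambda>s. iterD bs F (y + s *\<^sub>R b)) has_real_derivative dirD b (iterD bs F) y) (at 0)"
      by (rule dirD_has0[OF smooth_iterD[OF assms(1) bs] b])
    show "iterD (b # bs) (\<lambda>p. c * F p) y = c * iterD (b # bs) F y"
      using Cons.IH[OF bs] DERIV_imp_deriv[OF DERIV_cmult[OF 1, of c]]
      by (simp add: dirD_def[of b "\<lambda>p. c * iterD bs F p"])
  qed
qed

lemma smooth_add:
  assumes "smooth_fun F" "smooth_fun G" shows "smooth_fun (\<lambda>p. F p + G p)"
  unfolding smooth_fun_def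
proof (intro allI impI conjI ballI)
  fix bs :: "'a list" assume bs: "set bs \<subseteq> Basis"
  note e = iterD_add[OF assms bs]
  show "continuous_on UNIV (iterD bs (\<lambda>p. F p + G p))" unfolding e
    using assms bs unfolding smooth_fun_def by (auto intro!: continuous_intros)
  fix b y assume "b \<in> (Basis::'a set)"
  then show "(\<lambda>s. iterD bs (\<lambda>p. F p + G p) (y + s *\<^sub>R b)) differentiable (at 0)" unfolding e
    using assms bs unfolding smooth_fun_def by (auto intro!: differentiable_add)
qed

lemma smooth_cmult:
  assumes "smooth_fun F" shows "smooth_fun (\<lambda>p. c * F p)"
  unfolding smooth_fun_def
proof (intro allI impI conjI ballI)
  fix bs :: "'a list" assume bs: "set bs \<subseteq> Basis"
  note e = iterD_cmult[OF assms bs]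
  show "continuous_on UNIV (iterD bs (\<lambda>p. c * F p))" unfolding e
    using assms bs unfolding smooth_fun_def by (auto intro!: continuous_intros)
  fix b y assume "b \<in> (Basis::'a set)"
  then show "(\<lambda>s. iterD bs (\<lambda>p. c * F p) (y + s *\<^sub>R b)) differentiable (at 0)" unfolding e
    using assms bs unfolding smooth_fun_def by (auto intro!: differentiable_mult)
qed



lemma mvt_exists:
  fixes \<phi> \<phi>' :: "real \<Rightarrow> real"
  assumes d: "\<And>s. DERIV \<phi> s :> \<phi>' s"
  shows "\<exists>\<xi>. \<bar>\<xi>\<bar> \<le> \<bar>a\<bar> \<and> \<phi> a - \<phi> 0 = a * \<phi>' \<xi>"
proof (cases a "0::real" rule: linorder_cases)
  case less
  obtain z where "a < z" "z < 0" "\<phi> 0 - \<phi> a = (0 - a) * \<phi>' z" using MVT2[OF less, of \<phi> \<phi>'] d by blast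
  then show ?thesis by (intro exI[of _ z]) (auto simp: algebra_simps)
next
  case equal then show ?thesis by auto
next
  case greater
  obtain z where "0 < z" "z < a" "\<phi> a - \<phi> 0 = (a - 0) * \<phi>' z" using MVT2[OF greater, of \<phi> \<phi>'] d by blast
  then show ?thesis by (intro exI[of _ z]) (auto simp: algebra_simps)
qed

lemma mvt_bound:
  fixes \<phi> \<phi>' :: "real \<Rightarrow> real"
  assumes d: "\<And>s. DERIV \<phi> s :> \<phi>' s" and K: "\<And>s. \<bar>\<phi>' s\<bar> \<le> K"
  shows "\<bar>\<phi> a - \<phi> 0\<bar> \<le> K * \<bar>a\<bar>"
proof -
  obtain \<xi> where "\<phi> a - \<phi> 0 = a * \<phi>' \<xi>" using mvt_exists[OF d] by blast
  then have "\<bar>\<phi> a - \<phi> 0\<bar> = \<bar>a\<bar> * \<bar>\<phi>' \<xi>\<bar>" by (simp add: abs_mult)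
  also have "\<dots> \<le> \<bar>a\<bar> * K" using K[of \<xi>] by (simp add: mult_left_mono)
  finally show ?thesis by (simp add: mult.commute)
qed

lemma taylor1:
  fixes \<phi> \<phi>' \<phi>'' :: "real \<Rightarrow> real"
  assumes d: "\<And>s. DERIV \<phi> s :> \<phi>' s" and d2: "\<And>s. DERIV \<phi>' s :> \<phi>'' s"
    and K: "\<And>s. \<bar>\<phi>'' s\<bar> \<le> K"
  shows "\<bar>\<phi> a - \<phi> 0 - a * \<phi>' 0\<bar> \<le> K * a^2"
proof -
  obtain \<xi> where x: "\<bar>\<xi>\<bar> \<le> \<bar>a\<bar>" "\<phi> a - \<phi> 0 = a * \<phi>' \<xi>" using mvt_exists[OF d] by blast
  have K0: "0 \<le> K" using K[of 0] by linarith
  have "\<bar>\<phi>' \<xi> - \<phi>' 0\<bar> \<le> K * \<bar>\<xi>\<bar>" by (rule mvt_bound[OF d2 K])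
  also have "\<dots> \<le> K * \<bar>a\<bar>" using x(1) K0 by (simp add: mult_left_mono)
  finally have b: "\<bar>\<phi>' \<xi> - \<phi>' 0\<bar> \<le> K * \<bar>a\<bar>" .
  have "\<bar>\<phi> a - \<phi> 0 - a * \<phi>' 0\<bar> = \<bar>a\<bar> * \<bar>\<phi>' \<xi> - \<phi>' 0\<bar>"
    using x(2) by (simp add: abs_mult[symmetric] algebra_simps)
  also have "\<dots> \<le> \<bar>a\<bar> * (K * \<bar>a\<bar>)" using b by (simp add: mult_left_mono)
  also have "\<dots> = K * a^2" by (simp add: power2_eq_square abs_mult_self_eq algebra_simps)
  finally show ?thesis .
qed

lemma mixed_rep:
  fixes F :: "'a::euclidean_space \<Rightarrow> real"
  assumes sm: "smooth_fun F" and a: "a \<in> Basis" and b: "b \<in> Basis" and k: "0 < k"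
  shows "\<exists>\<sigma> \<tau>. 0 < \<sigma> \<and> \<sigma> < k \<and> 0 < \<tau> \<and> \<tau> < k \<and>
     F (p + k *\<^sub>R a + k *\<^sub>R b) - F (p + k *\<^sub>R a) - F (p + k *\<^sub>R b) + F p
       = k^2 * dirD b (dirD a F) (p + \<sigma> *\<^sub>R a + \<tau> *\<^sub>R b)"
proof -
  define \<phi> where "\<phi> s = F ((p + k *\<^sub>R b) + s *\<^sub>R a) - F (p + s *\<^sub>R a)" for s
  define \<phi>' where "\<phi>' s = dirD a F ((p + k *\<^sub>R b) + s *\<^sub>R a) - dirD a F (p + s *\<^sub>R a)" for s
  have "DERIV \<phi> s :> \<phi>' s" for s unfolding \<phi>_def \<phi>'_def by (intro DERIV_diff line_deriv[OF sm a])
  then obtain \<sigma> where s: "0<\<sigma>" "\<sigma><k" "\<phi> k - \<phi> 0 = (k - 0) * \<phi>' \<sigma>" using MVT2[OF k, of \<phi> \<phi>'] by blast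
  define \<psi> where "\<psi> t = dirD a F ((p + \<sigma> *\<^sub>R a) + t *\<^sub>R b)" for t
  have "DERIV \<psi> t :> dirD b (dirD a F) ((p + \<sigma> *\<^sub>R a) + t *\<^sub>R b)" for t
    unfolding \<psi>_def by (rule line_deriv[OF smooth_dirD[OF sm a] b])
  then obtain \<tau> where t: "0<\<tau>" "\<tau><k" "\<psi> k - \<psi> 0 = (k - 0) * dirD b (dirD a F) ((p + \<sigma> *\<^sub>R a) + \<tau> *\<^sub>R b)"
    using MVT2[OF k, of \<psi> "\<lambda>t. dirD b (dirD a F) ((p + \<sigma> *\<^sub>R a) + t *\<^sub>R b)"] by blast
  have e1: "\<phi>' \<sigma> = \<psi> k - \<psi> 0" unfolding \<phi>'_def \<psi>_def by (simp add: algebra_simps)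
  have e2: "\<phi> k - \<phi> 0 = F (p + k *\<^sub>R a + k *\<^sub>R b) - F (p + k *\<^sub>R a) - F (p + k *\<^sub>R b) + F p"
    unfolding \<phi>_def by (simp add: algebra_simps)
  show ?thesis using s t e1 e2
    by (intro exI[of _ \<sigma>] exI[of _ \<tau>]) (simp add: power2_eq_square)
qed

lemma schwarz:
  fixes F :: "'a::euclidean_space \<Rightarrow> real"
  assumes sm: "smooth_fun F" and a: "a \<in> Basis" and b: "b \<in> Basis"
  shows "dirD a (dirD b F) p = dirD b (dirD a F) p"
proof (rule ccontr)
  define G1 where "G1 = dirD b (dirD a F)"
  define G2 where "G2 = dirD a (dirD b F)"
  assume "dirD a (dirD b F) p \<noteq> dirD b (dirD a F) p"
  then have ne: "G1 p \<noteq> G2 p" unfolding G1_def G2_def by simp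
  define e where "e = \<bar>G1 p - G2 p\<bar> / 2"
  have e: "0 < e" using ne unfolding e_def by simp
  have c1: "continuous_on UNIV G1" unfolding G1_def
    using sm[unfolded smooth_fun_def, rule_format, of "[b,a]"] a b by simp
  have c2: "continuous_on UNIV G2" unfolding G2_def
    using sm[unfolded smooth_fun_def, rule_format, of "[a,b]"] a b by simp
  have "isCont G1 p" using c1 continuous_on_eq_continuous_at by blast
  then obtain d1 where d1: "d1 > 0" "\<And>x'. dist x' p < d1 \<Longrightarrow> dist (G1 x') (G1 p) < e"
    using e unfolding continuous_at_eps_delta by blast
  have "isCont G2 p" using c2 continuous_on_eq_continuous_at by blast
  then obtain d2 where d2: "d2 > 0" "\<And>x'. dist x' p < d2 \<Longrightarrow> dist (G2 x') (G2 p) < e"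
    using e unfolding continuous_at_eps_delta by blast
  define k where "k = min d1 d2 / 3"
  have k: "0 < k" "2 * k < d1" "2 * k < d2" using d1 d2 unfolding k_def by auto
  obtain \<sigma> \<tau> where st: "0 < \<sigma>" "\<sigma> < k" "0 < \<tau>" "\<tau> < k"
     "F (p + k *\<^sub>R a + k *\<^sub>R b) - F (p + k *\<^sub>R a) - F (p + k *\<^sub>R b) + F p
       = k^2 * G1 (p + \<sigma> *\<^sub>R a + \<tau> *\<^sub>R b)"
    using mixed_rep[OF sm a b k(1)] unfolding G1_def by blast
  obtain \<sigma>' \<tau>' where st': "0 < \<sigma>'" "\<sigma>' < k" "0 < \<tau>'" "\<tau>' < k"
     "F (p + k *\<^sub>R b + k *\<^sub>R a) - F (p + k *\<^sub>R b) - F (p + k *\<^sub>R a) + F p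
       = k^2 * G2 (p + \<sigma>' *\<^sub>R b + \<tau>' *\<^sub>R a)"
    using mixed_rep[OF sm b a k(1)] unfolding G2_def by blast
  have "p + k *\<^sub>R b + k *\<^sub>R a = p + k *\<^sub>R a + k *\<^sub>R b" by (simp add: algebra_simps)
  then have "F (p + k *\<^sub>R b + k *\<^sub>R a) = F (p + k *\<^sub>R a + k *\<^sub>R b)" by (rule arg_cong)
  then have "F (p + k *\<^sub>R b + k *\<^sub>R a) - F (p + k *\<^sub>R b) - F (p + k *\<^sub>R a) + F p =
     F (p + k *\<^sub>R a + k *\<^sub>R b) - F (p + k *\<^sub>R a) - F (p + k *\<^sub>R b) + F p" by linarith
  then have "k^2 * G1 (p + \<sigma> *\<^sub>R a + \<tau> *\<^sub>R b) = k^2 * G2 (p + \<sigma>' *\<^sub>R b + \<tau>' *\<^sub>R a)"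
    using st(5) st'(5) by linarith
  then have eq: "G1 (p + \<sigma> *\<^sub>R a + \<tau> *\<^sub>R b) = G2 (p + \<sigma>' *\<^sub>R b + \<tau>' *\<^sub>R a)" using k by simp
  have na: "norm a = 1" "norm b = 1" using a b by auto
  have "dist (p + \<sigma> *\<^sub>R a + \<tau> *\<^sub>R b) p = norm (\<sigma> *\<^sub>R a + \<tau> *\<^sub>R b)" by (simp add: dist_norm)
  also have "\<dots> \<le> norm (\<sigma> *\<^sub>R a) + norm (\<tau> *\<^sub>R b)" by (rule norm_triangle_ineq)
  also have "\<dots> = \<sigma> + \<tau>" using na st by simp
  finally have q1: "dist (p + \<sigma> *\<^sub>R a + \<tau> *\<^sub>R b) p < d1" using st k by linarith
  have "dist (p + \<sigma>' *\<^sub>R b + \<tau>' *\<^sub>R a) p = norm (\<sigma>' *\<^sub>R b + \<tau>' *\<^sub>R a)" by (simp add: dist_norm)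
  also have "\<dots> \<le> norm (\<sigma>' *\<^sub>R b) + norm (\<tau>' *\<^sub>R a)" by (rule norm_triangle_ineq)
  also have "\<dots> = \<sigma>' + \<tau>'" using na st' by simp
  finally have q2: "dist (p + \<sigma>' *\<^sub>R b + \<tau>' *\<^sub>R a) p < d2" using st' k by linarith
  have "\<bar>G1 (p + \<sigma> *\<^sub>R a + \<tau> *\<^sub>R b) - G1 p\<bar> < e" using d1(2)[OF q1] by (simp add: dist_real_def)
  moreover have "\<bar>G2 (p + \<sigma>' *\<^sub>R b + \<tau>' *\<^sub>R a) - G2 p\<bar> < e" using d2(2)[OF q2] by (simp add: dist_real_def)
  ultimately show False using eq unfolding e_def by (simp add: abs_real_def split: if_splits)
qed

lemma iterD_comm:
  fixes F :: "'a::euclidean_space \<Rightarrow> real"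
  assumes sm: "smooth_fun F" and b: "b \<in> Basis"
  shows "set bs \<subseteq> Basis \<Longrightarrow> iterD (b#bs) F = iterD (bs@[b]) F"
proof (induction bs)
  case Nil then show ?case by simp
next
  case (Cons c cs)
  then have c: "c \<in> Basis" and cs: "set cs \<subseteq> Basis" by auto
  have "iterD (b#c#cs) F = dirD b (dirD c (iterD cs F))" by simp
  also have "\<dots> = dirD c (dirD b (iterD cs F))"
    by (rule ext, rule schwarz[OF smooth_iterD[OF sm cs] b c])
  also have "\<dots> = dirD c (iterD (b#cs) F)" by simp
  also have "\<dots> = dirD c (iterD (cs@[b]) F)" using Cons.IH[OF cs] by simp
  finally show ?case by simp
qed



lemma taylor_pt:
  fixes F :: "'a::euclidean_space \<Rightarrow> real" and dir :: "'i \<Rightarrow> 'a" and c :: "'i \<Rightarrow> real"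
  assumes sm: "smooth_fun F" and fin: "finite I" and dB: "\<forall>i\<in>I. dir i \<in> Basis"
    and K: "\<forall>i\<in>I. \<forall>j\<in>I. \<forall>y. \<bar>dirD (dir i) (dirD (dir j) F) y\<bar> \<le> K"
  shows "\<bar>F (p + h *\<^sub>R (\<Sum>i\<in>I. c i *\<^sub>R dir i)) - F p - h * (\<Sum>i\<in>I. c i * dirD (dir i) F p)\<bar>
           \<le> K * (\<Sum>i\<in>I. \<bar>c i\<bar>)^2 * h^2"
proof -
  have "\<forall>p. \<bar>F (p + h *\<^sub>R (\<Sum>i\<in>S. c i *\<^sub>R dir i)) - F p - h * (\<Sum>i\<in>S. c i * dirD (dir i) F p)\<bar>
           \<le> K * (\<Sum>i\<in>S. \<bar>c i\<bar>)^2 * h^2" if "S \<subseteq> I" for S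
    using finite_subset[OF that fin] that
  proof (induction S rule: finite_subset_induct')
    case empty then show ?case by simp
  next
    case (insert a S)
    show ?case
    proof
      fix p
      define A where "A = (\<Sum>i\<in>S. \<bar>c i\<bar>)"
      define ca where "ca = c a"
      define da where "da = dir a"
      define q where "q = p + (h * ca) *\<^sub>R da"
      have da: "da \<in> Basis" using dB insert unfolding da_def by auto
      have K0: "0 \<le> K" using K insert(2) by (meson abs_ge_zero order_trans)
      have A0: "0 \<le> A" unfolding A_def by (simp add: sum_nonneg)
      have vec: "p + h *\<^sub>R (\<Sum>i\<in>insert a S. c i *\<^sub>R dir i) = q + h *\<^sub>R (\<Sum>i\<in>S. c i *\<^sub>R dir i)"
        using insert(1,4) unfolding q_def ca_def da_def by (simp add: algebra_simps)
      have IH: "\<bar>F (q + h *\<^sub>R (\<Sum>i\<in>S. c i *\<^sub>R dir i)) - F q - h * (\<Sum>i\<in>S. c i * dirD (dir i) F q)\<bar>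
           \<le> K * A^2 * h^2" using insert.IH unfolding A_def by blast
      have T1: "\<bar>F q - F p - (h * ca) * dirD da F p\<bar> \<le> K * (h * ca)^2"
      proof -
        have "\<bar>(\<lambda>s. F (p + s *\<^sub>R da)) (h * ca) - (\<lambda>s. F (p + s *\<^sub>R da)) 0
               - (h * ca) * (\<lambda>s. dirD da F (p + s *\<^sub>R da)) 0\<bar> \<le> K * (h * ca)^2"
        proof (rule taylor1)
          show "DERIV (\<lambda>s. F (p + s *\<^sub>R da)) s :> dirD da F (p + s *\<^sub>R da)" for s
            by (rule line_deriv[OF sm da])
          show "DERIV (\<lambda>s. dirD da F (p + s *\<^sub>R da)) s :> dirD da (dirD da F) (p + s *\<^sub>R da)" for s
            by (rule line_deriv[OF smooth_dirD[OF sm da] da])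
          show "\<bar>dirD da (dirD da F) (p + s *\<^sub>R da)\<bar> \<le> K" for s
            using K insert(2) unfolding da_def by blast
        qed
        then show ?thesis unfolding q_def by simp
      qed
      have T2: "\<bar>dirD (dir i) F q - dirD (dir i) F p\<bar> \<le> K * \<bar>h * ca\<bar>" if i: "i \<in> S" for i
      proof -
        have di: "dir i \<in> Basis" using dB insert i by auto
        have "\<bar>(\<lambda>s. dirD (dir i) F (p + s *\<^sub>R da)) (h * ca) - (\<lambda>s. dirD (dir i) F (p + s *\<^sub>R da)) 0\<bar>
               \<le> K * \<bar>h * ca\<bar>"
        proof (rule mvt_bound)
          show "DERIV (\<lambda>s. dirD (dir i) F (p + s *\<^sub>R da)) s :> dirD da (dirD (dir i) F) (p + s *\<^sub>R da)" for s
            by (rule line_deriv[OF smooth_dirD[OF sm di] da])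
          show "\<bar>dirD da (dirD (dir i) F) (p + s *\<^sub>R da)\<bar> \<le> K" for s
            using K insert(2) i insert(3) unfolding da_def by blast
        qed
        then show ?thesis unfolding q_def by simp
      qed
      have SB: "\<bar>\<Sum>i\<in>S. c i * (dirD (dir i) F q - dirD (dir i) F p)\<bar> \<le> K * \<bar>h * ca\<bar> * A"
      proof -
        have "\<bar>\<Sum>i\<in>S. c i * (dirD (dir i) F q - dirD (dir i) F p)\<bar>
              \<le> (\<Sum>i\<in>S. \<bar>c i * (dirD (dir i) F q - dirD (dir i) F p)\<bar>)" by (rule sum_abs)
        also have "\<dots> \<le> (\<Sum>i\<in>S. \<bar>c i\<bar> * (K * \<bar>h * ca\<bar>))"
        proof (rule sum_mono)
          fix i assume "i \<in> S"
          then show "\<bar>c i * (dirD (dir i) F q - dirD (dir i) F p)\<bar> \<le> \<bar>c i\<bar> * (K * \<bar>h * ca\<bar>)"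
            unfolding abs_mult[of "c i"] by (intro mult_left_mono T2) auto
        qed
        also have "\<dots> = K * \<bar>h * ca\<bar> * A" unfolding A_def by (simp add: sum_distrib_right[symmetric] mult.commute)
        finally show ?thesis .
      qed
      have split: "F (q + h *\<^sub>R (\<Sum>i\<in>S. c i *\<^sub>R dir i)) - F p - h * (\<Sum>i\<in>insert a S. c i * dirD (dir i) F p)
         = (F (q + h *\<^sub>R (\<Sum>i\<in>S. c i *\<^sub>R dir i)) - F q - h * (\<Sum>i\<in>S. c i * dirD (dir i) F q))
           + (F q - F p - (h * ca) * dirD da F p)
           + h * (\<Sum>i\<in>S. c i * (dirD (dir i) F q - dirD (dir i) F p))"
        using insert(1,4) unfolding ca_def da_def
        by (simp add: sum_subtractf right_diff_distrib algebra_simps)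
      have "\<bar>F (p + h *\<^sub>R (\<Sum>i\<in>insert a S. c i *\<^sub>R dir i)) - F p - h * (\<Sum>i\<in>insert a S. c i * dirD (dir i) F p)\<bar>
          \<le> K * A^2 * h^2 + K * (h * ca)^2 + \<bar>h\<bar> * (K * \<bar>h * ca\<bar> * A)"
      proof -
        have hz: "\<bar>h * (\<Sum>i\<in>S. c i * (dirD (dir i) F q - dirD (dir i) F p))\<bar> \<le> \<bar>h\<bar> * (K * \<bar>h * ca\<bar> * A)"
          using mult_left_mono[OF SB, of "\<bar>h\<bar>"] by (simp add: abs_mult)
        show ?thesis unfolding vec split using IH T1 hz abs_triangle_ineq
          by (smt (verit))
      qed
      also have "\<dots> = K * (A^2 + ca^2 + \<bar>ca\<bar> * A) * h^2"
        by (simp add: abs_mult power2_eq_square algebra_simps)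
      also have "\<dots> \<le> K * (\<bar>ca\<bar> + A)^2 * h^2"
      proof -
        have "A^2 + ca^2 + \<bar>ca\<bar> * A \<le> (\<bar>ca\<bar> + A)^2"
          using A0 by (simp add: power2_eq_square algebra_simps)
        then show ?thesis using K0 by (simp add: mult_left_mono mult_right_mono)
      qed
      also have "\<dots> = K * (\<Sum>i\<in>insert a S. \<bar>c i\<bar>)^2 * h^2"
        using insert(1,4) unfolding A_def ca_def by simp
      finally show "\<bar>F (p + h *\<^sub>R (\<Sum>i\<in>insert a S. c i *\<^sub>R dir i)) - F p - h * (\<Sum>i\<in>insert a S. c i * dirD (dir i) F p)\<bar>
          \<le> K * (\<Sum>i\<in>insert a S. \<bar>c i\<bar>)^2 * h^2" .
    qed
  qed
  then show ?thesis by blast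
qed



lemma smooth_diff:
  assumes "smooth_fun F" "smooth_fun G" shows "smooth_fun (\<lambda>p. F p - G p)"
  using smooth_add[OF assms(1) smooth_cmult[OF assms(2), of "-1"]] by simp

lemma iterD_diff:
  assumes "smooth_fun F" "smooth_fun G" "set bs \<subseteq> Basis"
  shows "iterD bs (\<lambda>p. F p - G p) = (\<lambda>p. iterD bs F p - iterD bs G p)"
  using iterD_add[OF assms(1) smooth_cmult[OF assms(2), of "-1"] assms(3)]
    iterD_cmult[OF assms(2,3), of "-1"] by simp

lemma smooth_sum:
  assumes "finite I" "\<forall>i\<in>I. smooth_fun (F i)" shows "smooth_fun (\<lambda>p. \<Sum>i\<in>I. F i p)"
  using assms by (induction I rule: finite_induct) (auto intro: smooth_add smooth_zero)

lemma iterD_sum: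
  assumes "finite I" "\<forall>i\<in>I. smooth_fun (F i)" "set bs \<subseteq> Basis"
  shows "iterD bs (\<lambda>p. \<Sum>i\<in>I. F i p) = (\<lambda>p. \<Sum>i\<in>I. iterD bs (F i) p)"
  using assms(1,2)
proof (induction I rule: finite_induct)
  case empty then show ?case by (simp add: iterD_zero)
next
  case (insert a S)
  have "iterD bs (\<lambda>p. \<Sum>i\<in>insert a S. F i p) = iterD bs (\<lambda>p. F a p + (\<Sum>i\<in>S. F i p))"
    using insert by simp
  also have "\<dots> = (\<lambda>p. iterD bs (F a) p + iterD bs (\<lambda>p. \<Sum>i\<in>S. F i p) p)"
    using insert by (intro iterD_add smooth_sum assms(3)) auto
  finally show ?case using insert by simp
qed

definition OK :: "nat \<Rightarrow> (real \<Rightarrow> 'a::euclidean_space \<Rightarrow> real) \<Rightarrow> bool" where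
  "OK n R \<longleftrightarrow> (\<forall>h>0. smooth_fun (R h)) \<and> bigO n R"

lemma bigO_cong:
  assumes "\<And>h p. 0 < h \<Longrightarrow> R h p = S h p" "bigO n S" shows "bigO n R"
  unfolding bigO_def
proof (intro allI impI)
  have e: "R h = S h" if "0 < h" for h using assms(1)[OF that] by (intro ext)
  fix bs :: "'a list" assume bs: "set bs \<subseteq> Basis"
  obtain C h0 where 1: "0 < h0" "\<forall>h y. 0 < h \<and> h \<le> h0 \<longrightarrow> \<bar>iterD bs (S h) y\<bar> \<le> C * h ^ n"
    using assms(2) bs unfolding bigO_def by blast
  show "\<exists>C h0. 0 < h0 \<and> (\<forall>h y. 0 < h \<and> h \<le> h0 \<longrightarrow> \<bar>iterD bs (R h) y\<bar> \<le> C * h ^ n)"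
  proof (rule exI[of _ C], rule exI[of _ h0], intro conjI allI impI)
    show "0 < h0" by fact
    fix h y assume h: "0 < h \<and> h \<le> h0"
    then have "R h = S h" using e by simp
    then show "\<bar>iterD bs (R h) y\<bar> \<le> C * h ^ n" using 1 h by simp
  qed
qed

lemma OK_cong:
  assumes "\<And>h p. 0 < h \<Longrightarrow> R h p = S h p" "OK n S" shows "OK n R"
  unfolding OK_def
proof (intro conjI allI impI)
  fix h :: real assume h: "0 < h"
  then have "R h = S h" using assms(1)[OF h] by (intro ext)
  then show "smooth_fun (R h)" using assms(2) h unfolding OK_def by simp
next
  show "bigO n R"
  proof (rule bigO_cong)
    show "R h p = S h p" if "0 < h" for h p by (rule assms(1)[OF that])
    show "bigO n S" using assms(2) unfolding OK_def by blast
  qed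
qed

lemma OK_zero: "OK n (\<lambda>h p. 0)"
  unfolding OK_def bigO_def by (auto simp: smooth_zero iterD_zero intro!: exI[of _ 1])

lemma OK_add:
  assumes "OK n R" "OK n S" shows "OK n (\<lambda>h p. R h p + S h p)"
  unfolding OK_def
proof (intro conjI allI impI)
  show "smooth_fun (\<lambda>p. R h p + S h p)" if "0 < h" for h
    using assms that unfolding OK_def by (auto intro: smooth_add)
  show "bigO n (\<lambda>h p. R h p + S h p)" unfolding bigO_def
  proof (intro allI impI)
    fix bs :: "'a list" assume bs: "set bs \<subseteq> Basis"
    obtain C1 h1 where 1: "0 < h1" "\<forall>h y. 0 < h \<and> h \<le> h1 \<longrightarrow> \<bar>iterD bs (R h) y\<bar> \<le> C1 * h ^ n"
      using assms(1) bs unfolding OK_def bigO_def by blast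
    obtain C2 h2 where 2: "0 < h2" "\<forall>h y. 0 < h \<and> h \<le> h2 \<longrightarrow> \<bar>iterD bs (S h) y\<bar> \<le> C2 * h ^ n"
      using assms(2) bs unfolding OK_def bigO_def by blast
    show "\<exists>C h0. 0 < h0 \<and> (\<forall>h y. 0 < h \<and> h \<le> h0 \<longrightarrow> \<bar>iterD bs (\<lambda>p. R h p + S h p) y\<bar> \<le> C * h ^ n)"
    proof (rule exI[of _ "C1 + C2"], rule exI[of _ "min h1 h2"], intro conjI allI impI)
      show "0 < min h1 h2" using 1 2 by simp
      fix h y assume h: "0 < h \<and> h \<le> min h1 h2"
      have "iterD bs (\<lambda>p. R h p + S h p) = (\<lambda>p. iterD bs (R h) p + iterD bs (S h) p)"
        using assms h bs unfolding OK_def by (intro iterD_add) auto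
      moreover have "\<bar>iterD bs (R h) y\<bar> \<le> C1 * h ^ n" "\<bar>iterD bs (S h) y\<bar> \<le> C2 * h ^ n"
        using 1 2 h by auto
      ultimately show "\<bar>iterD bs (\<lambda>p. R h p + S h p) y\<bar> \<le> (C1 + C2) * h ^ n"
        by (simp add: distrib_right)
    qed
  qed
qed

lemma OK_cmult:
  assumes "OK n R" shows "OK n (\<lambda>h p. c * R h p)"
  unfolding OK_def
proof (intro conjI allI impI)
  show "smooth_fun (\<lambda>p. c * R h p)" if "0 < h" for h
    using assms that unfolding OK_def by (auto intro: smooth_cmult)
  show "bigO n (\<lambda>h p. c * R h p)" unfolding bigO_def
  proof (intro allI impI)
    fix bs :: "'a list" assume bs: "set bs \<subseteq> Basis"
    obtain C1 h1 where 1: "0 < h1" "\<forall>h y. 0 < h \<and> h \<le> h1 \<longrightarrow> \<bar>iterD bs (R h) y\<bar> \<le> C1 * h ^ n"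
      using assms(1) bs unfolding OK_def bigO_def by blast
    show "\<exists>C h0. 0 < h0 \<and> (\<forall>h y. 0 < h \<and> h \<le> h0 \<longrightarrow> \<bar>iterD bs (\<lambda>p. c * R h p) y\<bar> \<le> C * h ^ n)"
    proof (rule exI[of _ "\<bar>c\<bar> * C1"], rule exI[of _ h1], intro conjI allI impI)
      show "0 < h1" using 1 by simp
      fix h y assume h: "0 < h \<and> h \<le> h1"
      have "iterD bs (\<lambda>p. c * R h p) = (\<lambda>p. c * iterD bs (R h) p)"
        using assms h bs unfolding OK_def by (intro iterD_cmult) auto
      moreover have "\<bar>iterD bs (R h) y\<bar> \<le> C1 * h ^ n" using 1 h by auto
      ultimately show "\<bar>iterD bs (\<lambda>p. c * R h p) y\<bar> \<le> \<bar>c\<bar> * C1 * h ^ n"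
        by (simp add: abs_mult mult_left_mono mult.assoc)
    qed
  qed
qed

lemma OK_hmult:
  assumes "OK n R" shows "OK (Suc n) (\<lambda>h p. h * R h p)"
  unfolding OK_def
proof (intro conjI allI impI)
  show "smooth_fun (\<lambda>p. h * R h p)" if "0 < h" for h
    using assms that unfolding OK_def by (auto intro: smooth_cmult)
  show "bigO (Suc n) (\<lambda>h p. h * R h p)" unfolding bigO_def
  proof (intro allI impI)
    fix bs :: "'a list" assume bs: "set bs \<subseteq> Basis"
    obtain C1 h1 where 1: "0 < h1" "\<forall>h y. 0 < h \<and> h \<le> h1 \<longrightarrow> \<bar>iterD bs (R h) y\<bar> \<le> C1 * h ^ n"
      using assms(1) bs unfolding OK_def bigO_def by blast
    show "\<exists>C h0. 0 < h0 \<and> (\<forall>h y. 0 < h \<and> h \<le> h0 \<longrightarrow> \<bar>iterD bs (\<lambda>p. h * R h p) y\<bar> \<le> C * h ^ Suc n)"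
    proof (rule exI[of _ "C1"], rule exI[of _ h1], intro conjI allI impI)
      show "0 < h1" using 1 by simp
      fix h y assume h: "0 < h \<and> h \<le> h1"
      have "iterD bs (\<lambda>p. h * R h p) = (\<lambda>p. h * iterD bs (R h) p)"
        using assms h bs unfolding OK_def by (intro iterD_cmult) auto
      moreover have "\<bar>iterD bs (R h) y\<bar> \<le> C1 * h ^ n" using 1 h by auto
      ultimately show "\<bar>iterD bs (\<lambda>p. h * R h p) y\<bar> \<le> C1 * h ^ Suc n"
        using h by (simp add: abs_mult mult_left_mono algebra_simps)
    qed
  qed
qed

lemma OK_mono:
  assumes "OK (Suc n) R" shows "OK n R"
  unfolding OK_def
proof (intro conjI allI impI)
  show "smooth_fun (R h)" if "0 < h" for h using assms that unfolding OK_def by auto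
  show "bigO n R" unfolding bigO_def
  proof (intro allI impI)
    fix bs :: "'a list" assume bs: "set bs \<subseteq> Basis"
    obtain C1 h1 where 1: "0 < h1" "\<forall>h y. 0 < h \<and> h \<le> h1 \<longrightarrow> \<bar>iterD bs (R h) y\<bar> \<le> C1 * h ^ Suc n"
      using assms(1) bs unfolding OK_def bigO_def by blast
    show "\<exists>C h0. 0 < h0 \<and> (\<forall>h y. 0 < h \<and> h \<le> h0 \<longrightarrow> \<bar>iterD bs (R h) y\<bar> \<le> C * h ^ n)"
    proof (rule exI[of _ "\<bar>C1\<bar>"], rule exI[of _ "min h1 1"], intro conjI allI impI)
      show "0 < min h1 1" using 1 by simp
      fix h y assume h: "0 < h \<and> h \<le> min h1 1"
      have a: "\<bar>iterD bs (R h) y\<bar> \<le> C1 * h ^ Suc n" using 1 h by auto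
      have "C1 * h ^ Suc n \<le> \<bar>C1\<bar> * h ^ Suc n" using h by (simp add: mult_right_mono)
      also have "\<dots> \<le> \<bar>C1\<bar> * h ^ n"
        using h by (intro mult_left_mono) (auto intro: power_decreasing)
      finally show "\<bar>iterD bs (R h) y\<bar> \<le> \<bar>C1\<bar> * h ^ n" using a by linarith
    qed
  qed
qed

lemma OK_diff:
  assumes "OK n R" "OK n S" shows "OK n (\<lambda>h p. R h p - S h p)"
  using OK_add[OF assms(1) OK_cmult[OF assms(2), of "-1"]] by simp

lemma OK_sum:
  assumes "finite I" "\<forall>i\<in>I. OK n (F i)" shows "OK n (\<lambda>h p. \<Sum>i\<in>I. F i h p)"
  using assms by (induction I rule: finite_induct) (auto intro: OK_add OK_zero)

lemma OK_dirD:
  assumes "OK n R" "b \<in> Basis" shows "OK n (\<lambda>h. dirD b (R h))"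
  unfolding OK_def
proof (intro conjI allI impI)
  show "smooth_fun (dirD b (R h))" if "0 < h" for h
    using assms that unfolding OK_def by (auto intro: smooth_dirD)
  show "bigO n (\<lambda>h. dirD b (R h))" unfolding bigO_def
  proof (intro allI impI)
    fix bs :: "'a list" assume bs: "set bs \<subseteq> Basis"
    then have "set (bs @ [b]) \<subseteq> Basis" using assms by auto
    then obtain C h0 where "0 < h0" "\<forall>h y. 0 < h \<and> h \<le> h0 \<longrightarrow> \<bar>iterD (bs @ [b]) (R h) y\<bar> \<le> C * h ^ n"
      using assms(1) unfolding OK_def bigO_def by blast
    then show "\<exists>C h0. 0 < h0 \<and> (\<forall>h y. 0 < h \<and> h \<le> h0 \<longrightarrow> \<bar>iterD bs (dirD b (R h)) y\<bar> \<le> C * h ^ n)"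
      unfolding iterD_append by auto
  qed
qed

lemma OK_shift:
  assumes "OK n R" shows "OK n (\<lambda>h p. R h (p + a h))"
  unfolding OK_def
proof (intro conjI allI impI)
  show "smooth_fun (\<lambda>p. R h (p + a h))" if "0 < h" for h
    using assms that unfolding OK_def by (auto intro: smooth_shift)
  show "bigO n (\<lambda>h p. R h (p + a h))" unfolding bigO_def iterD_shift
  proof (intro allI impI)
    fix bs :: "'a list" assume bs: "set bs \<subseteq> Basis"
    obtain C1 h1 where 1: "0 < h1" "\<forall>h y. 0 < h \<and> h \<le> h1 \<longrightarrow> \<bar>iterD bs (R h) y\<bar> \<le> C1 * h ^ n"
      using assms(1) bs unfolding OK_def bigO_def by blast
    then show "\<exists>C h0. 0 < h0 \<and> (\<forall>h y. 0 < h \<and> h \<le> h0 \<longrightarrow> \<bar>iterD bs (R h) (y + a h)\<bar> \<le> C * h ^ n)"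
      by blast
  qed
qed

lemma finite_bounds:
  fixes Q :: "'i \<Rightarrow> real \<Rightarrow> 'x \<Rightarrow> real"
  assumes "finite I" "\<forall>i\<in>I. \<exists>C h0. 0 < h0 \<and> (\<forall>h y. 0 < h \<and> h \<le> h0 \<longrightarrow> \<bar>Q i h y\<bar> \<le> C)"
  shows "\<exists>C h0. 0 < h0 \<and> (\<forall>i\<in>I. \<forall>h y. 0 < h \<and> h \<le> h0 \<longrightarrow> \<bar>Q i h y\<bar> \<le> C)"
  using assms
proof (induction I rule: finite_induct)
  case empty show ?case by (rule exI[of _ "0::real"], rule exI[of _ "1::real"]) simp
next
  case (insert a S)
  obtain C1 h1 where 1: "0 < h1" "\<forall>i\<in>S. \<forall>h y. 0 < h \<and> h \<le> h1 \<longrightarrow> \<bar>Q i h y\<bar> \<le> C1"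
    using insert by auto
  obtain C2 h2 where 2: "0 < h2" "\<forall>h y. 0 < h \<and> h \<le> h2 \<longrightarrow> \<bar>Q a h y\<bar> \<le> C2"
    using insert by auto
  show ?case
  proof (rule exI[of _ "max C1 C2"], rule exI[of _ "min h1 h2"], intro conjI ballI allI impI)
    show "0 < min h1 h2" using 1 2 by simp
    fix i h y assume i: "i \<in> insert a S" and h: "0 < h \<and> h \<le> min h1 h2"
    show "\<bar>Q i h y\<bar> \<le> max C1 C2"
    proof (cases "i = a")
      case True then show ?thesis using 2 h by (simp add: le_max_iff_disj)
    next
      case False then show ?thesis using 1 h i by (simp add: le_max_iff_disj)
    qed
  qed
qed



lemma OK_taylor:
  fixes g :: "real \<Rightarrow> 'a::euclidean_space \<Rightarrow> real" and dir :: "'i \<Rightarrow> 'a" and c :: "'i \<Rightarrow> real"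
  assumes g: "OK 0 g" and fin: "finite I" and dB: "\<forall>i\<in>I. dir i \<in> Basis"
  shows "OK 2 (\<lambda>h p. g h (p + h *\<^sub>R (\<Sum>i\<in>I. c i *\<^sub>R dir i)) - g h p
                  - h * (\<Sum>i\<in>I. c i * dirD (dir i) (g h) p))"
proof -
  define w where "w = (\<Sum>i\<in>I. c i *\<^sub>R dir i)"
  have sg: "smooth_fun (g h)" if "0 < h" for h using g that unfolding OK_def by auto
  have sA: "smooth_fun (\<lambda>p. g h (p + h *\<^sub>R w))" if "0 < h" for h by (rule smooth_shift[OF sg[OF that]])
  have sT: "\<forall>i\<in>I. smooth_fun (\<lambda>p. c i * dirD (dir i) (g h) p)" if "0 < h" for h
    using dB by (auto intro!: smooth_cmult smooth_dirD sg that)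
  have sS: "smooth_fun (\<lambda>p. \<Sum>i\<in>I. c i * dirD (dir i) (g h) p)" if "0 < h" for h
    by (rule smooth_sum[OF fin sT[OF that]])
  have sAB: "smooth_fun (\<lambda>p. g h (p + h *\<^sub>R w) - g h p)" if "0 < h" for h
    by (rule smooth_diff[OF sA[OF that] sg[OF that]])
  have shS: "smooth_fun (\<lambda>p. h * (\<Sum>i\<in>I. c i * dirD (dir i) (g h) p))" if "0 < h" for h
    by (rule smooth_cmult[OF sS[OF that]])
  show ?thesis unfolding w_def[symmetric] OK_def
  proof (intro conjI allI impI)
    fix h :: real assume h: "0 < h"
    show "smooth_fun (\<lambda>p. g h (p + h *\<^sub>R w) - g h p - h * (\<Sum>i\<in>I. c i * dirD (dir i) (g h) p))"
      by (rule smooth_diff[OF sAB[OF h] shS[OF h]])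
  next
    show "bigO 2 (\<lambda>h p. g h (p + h *\<^sub>R w) - g h p - h * (\<Sum>i\<in>I. c i * dirD (dir i) (g h) p))"
      unfolding bigO_def
    proof (intro allI impI)
      fix bs :: "'a list" assume bs: "set bs \<subseteq> Basis"
      have "\<forall>ij\<in>I \<times> I. \<exists>C h0. 0 < h0 \<and> (\<forall>h y. 0 < h \<and> h \<le> h0 \<longrightarrow>
              \<bar>iterD (dir (fst ij) # dir (snd ij) # bs) (g h) y\<bar> \<le> C)"
      proof
        fix ij assume ij: "ij \<in> I \<times> I"
        then have ss: "set (dir (fst ij) # dir (snd ij) # bs) \<subseteq> Basis" using dB bs by auto
        show "\<exists>C h0. 0 < h0 \<and> (\<forall>h y. 0 < h \<and> h \<le> h0 \<longrightarrow>
              \<bar>iterD (dir (fst ij) # dir (snd ij) # bs) (g h) y\<bar> \<le> C)"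
          using g[unfolded OK_def bigO_def, THEN conjunct2, rule_format, OF ss] by simp
      qed
      from finite_bounds[OF _ this] fin obtain C h0 where C: "0 < h0"
        "\<forall>ij\<in>I \<times> I. \<forall>h y. 0 < h \<and> h \<le> h0 \<longrightarrow> \<bar>iterD (dir (fst ij) # dir (snd ij) # bs) (g h) y\<bar> \<le> C"
        by blast
      show "\<exists>C h0. 0 < h0 \<and> (\<forall>h y. 0 < h \<and> h \<le> h0 \<longrightarrow>
          \<bar>iterD bs (\<lambda>p. g h (p + h *\<^sub>R w) - g h p - h * (\<Sum>i\<in>I. c i * dirD (dir i) (g h) p)) y\<bar>
            \<le> C * h ^ 2)"
      proof (rule exI[of _ "C * (\<Sum>i\<in>I. \<bar>c i\<bar>)^2"], rule exI[of _ h0], intro conjI allI impI)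
        show "0 < h0" by fact
        fix h y assume hh: "0 < h \<and> h \<le> h0"
        then have h: "0 < h" by simp
        define G' where "G' = iterD bs (g h)"
        have sG': "smooth_fun G'" unfolding G'_def by (rule smooth_iterD[OF sg[OF h] bs])
        have comm: "iterD bs (dirD (dir i) (g h)) = dirD (dir i) G'" if i: "i \<in> I" for i
        proof -
          have "iterD bs (dirD (dir i) (g h)) = iterD (bs @ [dir i]) (g h)" by (simp add: iterD_append)
          also have "\<dots> = iterD (dir i # bs) (g h)"
            using iterD_comm[OF sg[OF h], of "dir i" bs] dB i bs by simp
          finally show ?thesis unfolding G'_def by simp
        qed
        have e1: "iterD bs (\<lambda>p. g h (p + h *\<^sub>R w) - g h p - h * (\<Sum>i\<in>I. c i * dirD (dir i) (g h) p))
            = (\<lambda>p. iterD bs (\<lambda>p. g h (p + h *\<^sub>R w) - g h p) p - iterD bs (\<lambda>p. h * (\<Sum>i\<in>I. c i * dirD (dir i) (g h) p)) p)"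
          by (rule iterD_diff[OF sAB[OF h] shS[OF h] bs])
        have e2: "iterD bs (\<lambda>p. g h (p + h *\<^sub>R w) - g h p) = (\<lambda>p. G' (p + h *\<^sub>R w) - G' p)"
          unfolding iterD_diff[OF sA[OF h] sg[OF h] bs] iterD_shift G'_def ..
        have e3: "iterD bs (\<lambda>p. h * (\<Sum>i\<in>I. c i * dirD (dir i) (g h) p))
            = (\<lambda>p. h * (\<Sum>i\<in>I. c i * dirD (dir i) G' p))"
        proof -
          have "iterD bs (\<lambda>p. h * (\<Sum>i\<in>I. c i * dirD (dir i) (g h) p))
              = (\<lambda>p. h * iterD bs (\<lambda>p. \<Sum>i\<in>I. c i * dirD (dir i) (g h) p) p)"
            by (rule iterD_cmult[OF sS[OF h] bs])
          also have "\<dots> = (\<lambda>p. h * (\<Sum>i\<in>I. iterD bs (\<lambda>p. c i * dirD (dir i) (g h) p) p))"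
            unfolding iterD_sum[OF fin sT[OF h] bs] ..
          also have "\<dots> = (\<lambda>p. h * (\<Sum>i\<in>I. c i * dirD (dir i) G' p))"
          proof (intro ext arg_cong[where f="\<lambda>x. h * x"] sum.cong refl)
            fix p i assume i: "i \<in> I"
            have "iterD bs (\<lambda>p. c i * dirD (dir i) (g h) p) = (\<lambda>p. c i * iterD bs (dirD (dir i) (g h)) p)"
              using dB i by (intro iterD_cmult smooth_dirD sg h bs) auto
            then show "iterD bs (\<lambda>p. c i * dirD (dir i) (g h) p) p = c i * dirD (dir i) G' p"
              using comm[OF i] by simp
          qed
          finally show ?thesis .
        qed
        have "\<bar>G' (y + h *\<^sub>R w) - G' y - h * (\<Sum>i\<in>I. c i * dirD (dir i) G' y)\<bar>
              \<le> C * (\<Sum>i\<in>I. \<bar>c i\<bar>)^2 * h^2"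
          unfolding w_def
        proof (rule taylor_pt[OF sG' fin dB])
          show "\<forall>i\<in>I. \<forall>j\<in>I. \<forall>y. \<bar>dirD (dir i) (dirD (dir j) G') y\<bar> \<le> C"
            using C(2) hh unfolding G'_def by auto
        qed
        then show "\<bar>iterD bs (\<lambda>p. g h (p + h *\<^sub>R w) - g h p - h * (\<Sum>i\<in>I. c i * dirD (dir i) (g h) p)) y\<bar>
            \<le> C * (\<Sum>i\<in>I. \<bar>c i\<bar>)^2 * h ^ 2"
          unfolding e1 e2 e3 by simp
      qed
    qed
  qed
qed



lemma sum_option_UNIV:
  fixes g :: "'d::finite option \<Rightarrow> 'b::comm_monoid_add"
  shows "(\<Sum>i\<in>UNIV. g i) = g None + (\<Sum>\<beta>\<in>UNIV. g (Some \<beta>))"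
proof -
  have "(\<Sum>i\<in>UNIV. g i) = (\<Sum>i\<in>insert None (range Some). g i)" by (simp add: UNIV_option_conv[symmetric])
  also have "\<dots> = g None + (\<Sum>i\<in>range Some. g i)" by (subst sum.insert) auto
  also have "(\<Sum>i\<in>range Some. g i) = (\<Sum>\<beta>\<in>UNIV. g (Some \<beta>))" by (subst sum.reindex) auto
  finally show ?thesis .
qed

lemma basis_t: "((0::real^'d::finite), (1::real)) \<in> Basis"
  by (simp add: Basis_prod_def)

lemma basis_x: "((axis (\<beta>::'d::finite) (1::real)), (0::real)) \<in> Basis"
  by (auto simp: Basis_prod_def Basis_vec_def)

definition Dv :: "real^'d::finite \<Rightarrow> ((real^'d) \<times> real \<Rightarrow> real) \<Rightarrow> (real^'d) \<times> real \<Rightarrow> real" where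
  "Dv u F p = pt F p + (\<Sum>\<beta>\<in>UNIV. u $ \<beta> * px \<beta> F p)"

definition ddir :: "'d::finite option \<Rightarrow> (real^'d) \<times> real" where
  "ddir i = (case i of None \<Rightarrow> (0, 1) | Some \<beta> \<Rightarrow> (axis \<beta> 1, 0))"

definition dco :: "real^'d::finite \<Rightarrow> 'd option \<Rightarrow> real" where
  "dco u i = (case i of None \<Rightarrow> 1 | Some \<beta> \<Rightarrow> u $ \<beta>)"

lemma ddir_Basis: "\<forall>i\<in>UNIV. ddir i \<in> Basis"
  by (auto simp: ddir_def basis_t basis_x split: option.splits)

lemma dsum_vec: "(\<Sum>i\<in>UNIV. dco u i *\<^sub>R ddir i) = (u, 1)"
proof -
  have "(\<Sum>i\<in>UNIV. dco u i *\<^sub>R ddir i) = (0, 1) + (\<Sum>\<beta>\<in>UNIV. u $ \<beta> *\<^sub>R (axis \<beta> 1, 0))"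
    by (simp add: sum_option_UNIV dco_def ddir_def)
  also have "(\<Sum>\<beta>\<in>UNIV. u $ \<beta> *\<^sub>R ((axis \<beta> 1, 0) :: (real^'a) \<times> real)) = (\<Sum>\<beta>\<in>UNIV. u $ \<beta> *\<^sub>R axis \<beta> 1, 0)"
    by (simp add: sum_prod)
  also have "(\<Sum>\<beta>\<in>UNIV. u $ \<beta> *\<^sub>R axis \<beta> (1::real)) = u"
    using basis_expansion[of u] by (simp add: scalar_mult_eq_scaleR)
  finally show ?thesis by simp
qed

lemma dsum_der: "(\<Sum>i\<in>UNIV. dco u i * dirD (ddir i) F p) = Dv u F p"
  by (simp add: sum_option_UNIV dco_def ddir_def Dv_def pt_def px_def)

lemma OK_taylor_Dv:
  fixes g :: "real \<Rightarrow> (real^'d::finite) \<times> real \<Rightarrow> real"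
  assumes "OK 0 g"
  shows "OK 2 (\<lambda>h p. g h (p + h *\<^sub>R (u, 1)) - g h p - h * Dv u (g h) p)"
  using OK_taylor[OF assms finite_class.finite_UNIV ddir_Basis, of "dco u"]
  unfolding dsum_vec dsum_der .

lemma OK_Dv:
  fixes F :: "real \<Rightarrow> (real^'d::finite) \<times> real \<Rightarrow> real"
  assumes "OK n F"
  shows "OK n (\<lambda>h. Dv u (F h))"
proof -
  have "OK n (\<lambda>h p. dirD (0, 1) (F h) p + (\<Sum>\<beta>\<in>UNIV. u $ \<beta> * dirD (axis \<beta> 1, 0) (F h) p))"
    by (intro OK_add OK_dirD assms basis_t OK_sum ballI OK_cmult basis_x finite_class.finite_UNIV)
  then show ?thesis unfolding Dv_def pt_def px_def by simp
qed

lemma dirD_diff: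
  assumes "smooth_fun F" "smooth_fun G" "b \<in> Basis"
  shows "dirD b (\<lambda>p. F p - G p) p = dirD b F p - dirD b G p"
  using iterD_diff[OF assms(1,2), of "[b]"] assms(3) by (simp add: fun_eq_iff)

lemma dirD_add:
  assumes "smooth_fun F" "smooth_fun G" "b \<in> Basis"
  shows "dirD b (\<lambda>p. F p + G p) p = dirD b F p + dirD b G p"
  using iterD_add[OF assms(1,2), of "[b]"] assms(3) by (simp add: fun_eq_iff)

lemma dirD_cmult:
  assumes "smooth_fun F" "b \<in> Basis"
  shows "dirD b (\<lambda>p. c * F p) p = c * dirD b F p"
  using iterD_cmult[OF assms(1), of "[b]"] assms(2) by (simp add: fun_eq_iff)

lemma dirD_sum:
  assumes "finite I" "\<forall>i\<in>I. smooth_fun (F i)" "b \<in> Basis"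
  shows "dirD b (\<lambda>p. \<Sum>i\<in>I. F i p) p = (\<Sum>i\<in>I. dirD b (F i) p)"
  using iterD_sum[OF assms(1,2), of "[b]"] assms(3) by (simp add: fun_eq_iff)

lemma Dv_diff:
  fixes F G :: "(real^'d::finite) \<times> real \<Rightarrow> real"
  assumes "smooth_fun F" "smooth_fun G"
  shows "Dv u (\<lambda>p. F p - G p) p = Dv u F p - Dv u G p"
  unfolding Dv_def pt_def px_def
  using dirD_diff[OF assms basis_t] dirD_diff[OF assms basis_x]
  by (simp add: sum_subtractf right_diff_distrib)

lemma smooth_Dv:
  fixes F :: "(real^'d::finite) \<times> real \<Rightarrow> real"
  assumes "smooth_fun F" shows "smooth_fun (Dv u F)"
proof -
  have "smooth_fun (\<lambda>p. dirD (0, 1) F p + (\<Sum>\<beta>\<in>UNIV. u $ \<beta> * dirD (axis \<beta> 1, 0) F p))"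
    by (intro smooth_add smooth_dirD assms basis_t smooth_sum ballI smooth_cmult basis_x finite_class.finite_UNIV)
  then show ?thesis unfolding Dv_def[abs_def] pt_def px_def by simp
qed

lemma inv_apply:
  fixes A B :: "nat \<Rightarrow> nat \<Rightarrow> real"
  assumes "\<forall>i\<le>J. \<forall>l\<le>J. (\<Sum>k\<le>J. A i k * B k l) = (if i = l then 1 else 0)" "i \<le> J"
  shows "(\<Sum>k\<le>J. A i k * (\<Sum>l\<le>J. B k l * x l)) = x i"
proof -
  have "(\<Sum>k\<le>J. A i k * (\<Sum>l\<le>J. B k l * x l)) = (\<Sum>k\<le>J. \<Sum>l\<le>J. A i k * B k l * x l)"
    by (simp add: sum_distrib_left mult.assoc)
  also have "\<dots> = (\<Sum>l\<le>J. \<Sum>k\<le>J. A i k * B k l * x l)" by (rule sum.swap)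
  also have "\<dots> = (\<Sum>l\<le>J. (\<Sum>k\<le>J. A i k * B k l) * x l)" by (simp add: sum_distrib_right)
  also have "\<dots> = (\<Sum>l\<le>J. (if i = l then 1 else 0) * x l)" using assms by simp
  also have "\<dots> = (\<Sum>l\<le>J. if l = i then x l else 0)" by (rule sum.cong) auto
  also have "\<dots> = x i" using assms(2) by simp
  finally show ?thesis .
qed



lemma OK2_1: "OK 2 R \<Longrightarrow> OK 1 R" using OK_mono[of 1 R] by (simp add: numeral_2_eq_2)
lemma OK1_0: "OK 1 R \<Longrightarrow> OK 0 R" using OK_mono[of 0 R] by simp
lemma OK_hmult01: "OK 0 R \<Longrightarrow> OK 1 (\<lambda>h p. h * R h p)" using OK_hmult[of 0 R] by simp
lemma OK_hmult12: "OK 1 R \<Longrightarrow> OK 2 (\<lambda>h p. h * R h p)" using OK_hmult[of 1 R] by (simp add: numeral_2_eq_2)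

theorem proposition5:
  fixes J :: nat and lam :: real
    and e :: "nat \<Rightarrow> real^'d::finite"
    and \<iota> :: "nat \<Rightarrow> 'd"
    and M Minv :: "nat \<Rightarrow> nat \<Rightarrow> real"
    and G :: "nat \<Rightarrow> real \<times> (real^'d) \<Rightarrow> real"
    and s :: "nat \<Rightarrow> real"
    and f :: "real \<Rightarrow> nat \<Rightarrow> (real^'d) \<times> real \<Rightarrow> real"
  defines "v \<equiv> (\<lambda>j. lam *\<^sub>R e j)"
  assumes lam_pos: "0 < lam"
    and J_ge: "CARD('d) \<le> J"
    and iota: "bij_betw \<iota> {1..CARD('d)} UNIV"
    and M0: "\<forall>j\<le>J. M 0 j = 1"
    and Malpha: "\<forall>\<alpha>\<in>{1..CARD('d)}. \<forall>j\<le>J. M \<alpha> j = v j $ \<iota> \<alpha>"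
    and Minv_left: "\<forall>i\<le>J. \<forall>l\<le>J. (\<Sum>k\<le>J. Minv i k * M k l) = (if i = l then 1 else 0)"
    and Minv_right: "\<forall>i\<le>J. \<forall>l\<le>J. (\<Sum>k\<le>J. M i k * Minv k l) = (if i = l then 1 else 0)"
    and G_smooth: "\<forall>j\<le>J. smooth_fun (G j)"
    and G_mass: "\<forall>\<rho> q. (\<Sum>j\<le>J. G j (\<rho>, q)) = \<rho>"
    and G_mom: "\<forall>\<rho> q. \<forall>\<alpha>\<in>{1..CARD('d)}. (\<Sum>j\<le>J. v j $ \<iota> \<alpha> * G j (\<rho>, q)) = q $ \<iota> \<alpha>"
    and s_range: "\<forall>k. CARD('d) + 1 \<le> k \<and> k \<le> J \<longrightarrow> 0 < s k \<and> s k \<le> 2"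
    and f_smooth: "\<forall>h>0. \<forall>j\<le>J. smooth_fun (f h j)"
    and f_bounded: "\<forall>j\<le>J. bigO 0 (\<lambda>h. f h j)"
    and advection: "\<forall>h>0. \<forall>j\<le>J. \<forall>x t.
        f h j (x, t + h) = fstar J M Minv G s \<iota> f h j (x - h *\<^sub>R v j, t)"
  shows "(\<forall>k. CARD('d) + 1 \<le> k \<and> k \<le> J \<longrightarrow>
            bigO 2 (\<lambda>h p. mom J M f h k p
                 - (meq J M G \<iota> f h k p - (h / s k) * theta J M G v \<iota> f h k p)))
       \<and> (\<forall>k. CARD('d) + 1 \<le> k \<and> k \<le> J \<longrightarrow>
            bigO 2 (\<lambda>h p. mstar J M G s \<iota> f h k p
                 - (meq J M G \<iota> f h k p - (1 / s k - 1) * h * theta J M G v \<iota> f h k p)))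
       \<and> (\<forall>j\<le>J. \<forall>\<beta>. 
            bigO 2 (\<lambda>h p. px \<beta> (fstar J M Minv G s \<iota> f h j) p
                 - (px \<beta> (feq J M G \<iota> f h j) p
                    - h * (\<Sum>k\<in>{CARD('d)+1..J}. (1 / s k - 1) * Minv j k
                                  * px \<beta> (theta J M G v \<iota> f h k) p))))"
proof -
  let ?N = "CARD('d)"
  let ?mom = "mom J M f" and ?meq = "meq J M G \<iota> f" and ?mst = "mstar J M G s \<iota> f"
    and ?fst = "fstar J M Minv G s \<iota> f" and ?feq = "feq J M G \<iota> f" and ?th = "theta J M G v \<iota> f"
  have Of: "OK 0 (\<lambda>h. f h j)" if "j \<le> J" for j
    unfolding OK_def using f_smooth f_bounded that by auto
  have FS: "?fst h j p = f h j (p + h *\<^sub>R (v j, 1))" if "0 < h" "j \<le> J" for h j p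
  proof (cases p)
    case (Pair y t)
    have "f h j (y + h *\<^sub>R v j, t + h) = ?fst h j (y + h *\<^sub>R v j - h *\<^sub>R v j, t)"
      using advection that by blast
    then show ?thesis using Pair by (simp add: algebra_simps)
  qed
  have Ofst: "OK 0 (\<lambda>h. ?fst h j)" if "j \<le> J" for j
    by (rule OK_cong[OF FS OK_shift[OF Of]]) (use that in auto)
  have MS: "?mst h i p = (\<Sum>j\<le>J. M i j * ?fst h j p)" if "i \<le> J" for h i p
    unfolding fstar_def using inv_apply[OF Minv_right that, of "\<lambda>k. ?mst h k p"] by simp
  have FM: "f h j p = (\<Sum>k\<le>J. Minv j k * ?mom h k p)" if "j \<le> J" for h j p
    unfolding mom_def using inv_apply[OF Minv_left that, of "\<lambda>l. f h l p"] by simp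
  have FEQ: "?feq h j p = (\<Sum>k\<le>J. Minv j k * ?meq h k p)" if "j \<le> J" for h j p
    unfolding meq_def using inv_apply[OF Minv_left that, of "\<lambda>l. ?feq h l p"] by simp
  have inj: "inj_on \<iota> {1..?N}" using iota bij_betw_imp_inj_on by blast
  have MEQlow: "?meq h k p = ?mom h k p" if "k \<le> ?N" for h k p
  proof (cases "k = 0")
    case True
    then show ?thesis using M0 G_mass unfolding meq_def feq_def Wvar_def by simp
  next
    case False
    then have k: "k \<in> {1..?N}" using that by auto
    have "?meq h k p = (\<Sum>j\<le>J. v j $ \<iota> k * G j (Wvar J M \<iota> f h p))"
      unfolding meq_def feq_def using Malpha k by simp
    also have "\<dots> = (\<chi> \<beta>. mom J M f h (the_inv_into {1..?N} \<iota> \<beta>) p) $ \<iota> k"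
      unfolding Wvar_def using G_mom k by blast
    also have "\<dots> = ?mom h k p" using the_inv_into_f_f[OF inj k] by simp
    finally show ?thesis .
  qed
  have MSTh: "?mst h k p = (1 - s k) * ?mom h k p + s k * ?meq h k p" if "?N < k" for h k p
    using that unfolding mstar_def by simp
  have MSTl: "?mst h k p = ?mom h k p" if "k \<le> ?N" for h k p
    using that unfolding mstar_def by simp
  have spos: "0 < s k" if "?N < k" "k \<le> J" for k using s_range that by auto
  have Omom: "OK 0 (\<lambda>h. ?mom h k)" for k
  proof (rule OK_cong)
    show "?mom h k p = (\<Sum>j\<in>{..J}. M k j * f h j p)" for h p by (simp add: mom_def)
    show "OK 0 (\<lambda>h p. \<Sum>j\<in>{..J}. M k j * f h j p)"
      by (intro OK_sum finite_atMost ballI OK_cmult Of) simp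
  qed
  define R2 where "R2 j h p = f h j (p + h *\<^sub>R (v j, 1)) - f h j p - h * Dv (v j) (f h j) p" for j h p
  have T: "OK 2 (R2 j)" if "j \<le> J" for j
    unfolding R2_def[abs_def] by (rule OK_taylor_Dv[OF Of[OF that]])
  have ODf: "OK 0 (\<lambda>h. Dv (v j) (f h j))" if "j \<le> J" for j by (rule OK_Dv[OF Of[OF that]])
  have E1eq: "?mst h k p - ?mom h k p = (\<Sum>j\<le>J. M k j * (R2 j h p + h * Dv (v j) (f h j) p))"
    if "0 < h" "k \<le> J" for h k p
  proof -
    have "?mst h k p - ?mom h k p = (\<Sum>j\<le>J. M k j * ?fst h j p) - (\<Sum>j\<le>J. M k j * f h j p)"
      using MS[OF that(2)] by (simp add: mom_def)
    also have "\<dots> = (\<Sum>j\<le>J. M k j * (?fst h j p - f h j p))"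
      by (simp add: sum_subtractf right_diff_distrib)
    also have "\<dots> = (\<Sum>j\<le>J. M k j * (R2 j h p + h * Dv (v j) (f h j) p))"
      by (rule sum.cong) (simp_all add: FS[OF that(1)] R2_def)
    finally show ?thesis .
  qed
  have E1: "OK 1 (\<lambda>h p. ?mst h k p - ?mom h k p)" if "k \<le> J" for k
  proof (rule OK_cong)
    show "?mst h k p - ?mom h k p = (\<Sum>j\<in>{..J}. M k j * (R2 j h p + h * Dv (v j) (f h j) p))"
      if "0 < h" for h p using E1eq[OF that \<open>k \<le> J\<close>] by simp
    show "OK 1 (\<lambda>h p. \<Sum>j\<in>{..J}. M k j * (R2 j h p + h * Dv (v j) (f h j) p))"
      by (intro OK_sum finite_atMost ballI OK_cmult OK_add OK2_1 T OK_hmult01 ODf) auto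
  qed
  have MM: "OK 1 (\<lambda>h p. ?meq h k p - ?mom h k p)" if "k \<le> J" for k
  proof (cases "k \<le> ?N")
    case True
    show ?thesis by (rule OK_cong[OF _ OK_zero]) (simp add: MEQlow[OF True])
  next
    case False
    then have sk: "0 < s k" using spos that by simp
    show ?thesis
    proof (rule OK_cong[OF _ OK_cmult[OF E1[OF that], of "1 / s k"]])
      fix h p
      show "?meq h k p - ?mom h k p = 1 / s k * (?mst h k p - ?mom h k p)"
        using MSTh[of k h p] False sk by (simp add: field_simps)
    qed
  qed
  have FF: "OK 1 (\<lambda>h p. ?feq h j p - f h j p)" if "j \<le> J" for j
  proof (rule OK_cong)
    show "?feq h j p - f h j p = (\<Sum>k\<in>{..J}. Minv j k * (?meq h k p - ?mom h k p))" for h p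
      using FEQ[OF that, of h p] FM[OF that, of h p]
      by (simp add: sum_subtractf right_diff_distrib)
    show "OK 1 (\<lambda>h p. \<Sum>k\<in>{..J}. Minv j k * (?meq h k p - ?mom h k p))"
      by (intro OK_sum finite_atMost ballI OK_cmult MM) simp
  qed
  have Ofeq: "OK 0 (\<lambda>h. ?feq h j)" if "j \<le> J" for j
    by (rule OK_cong[OF _ OK_add[OF Of[OF that] OK1_0[OF FF[OF that]]]]) simp
  have smf: "smooth_fun (f h j)" if "0 < h" "j \<le> J" for h j using Of[OF that(2)] that(1) unfolding OK_def by auto
  have smfeq: "smooth_fun (?feq h j)" if "0 < h" "j \<le> J" for h j using Ofeq[OF that(2)] that(1) unfolding OK_def by auto
  have DD: "OK 1 (\<lambda>h p. Dv (v j) (f h j) p - Dv (v j) (?feq h j) p)" if "j \<le> J" for j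
  proof -
    have a: "OK 1 (\<lambda>h p. f h j p - ?feq h j p)"
      by (rule OK_cong[OF _ OK_cmult[OF FF[OF that], of "-1"]]) simp
    show ?thesis
      by (rule OK_cong[OF _ OK_Dv[OF a]]) (simp add: Dv_diff smf smfeq that)
  qed
  have Theq: "?th h k p = (\<Sum>j\<le>J. M k j * Dv (v j) (?feq h j) p)" for h k p
    by (simp add: theta_def Dv_def)
  have Oth: "OK 0 (\<lambda>h. ?th h k)" for k
  proof (rule OK_cong)
    show "?th h k p = (\<Sum>j\<in>{..J}. M k j * Dv (v j) (?feq h j) p)" for h p by (simp add: Theq)
    show "OK 0 (\<lambda>h p. \<Sum>j\<in>{..J}. M k j * Dv (v j) (?feq h j) p)"
      by (intro OK_sum finite_atMost ballI OK_cmult OK_Dv Ofeq) simp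
  qed
  have E2: "OK 2 (\<lambda>h p. ?mst h k p - ?mom h k p - h * ?th h k p)" if "k \<le> J" for k
  proof (rule OK_cong)
    fix h :: real and p assume h: "0 < h"
    show "?mst h k p - ?mom h k p - h * ?th h k p
      = (\<Sum>j\<in>{..J}. M k j * R2 j h p) + h * (\<Sum>j\<in>{..J}. M k j * (Dv (v j) (f h j) p - Dv (v j) (?feq h j) p))"
      unfolding E1eq[OF h that] Theq
      by (simp add: sum_subtractf sum.distrib right_diff_distrib distrib_left sum_distrib_left algebra_simps)
  next
    show "OK 2 (\<lambda>h p. (\<Sum>j\<in>{..J}. M k j * R2 j h p) + h * (\<Sum>j\<in>{..J}. M k j * (Dv (v j) (f h j) p - Dv (v j) (?feq h j) p)))"
      by (intro OK_add OK_sum finite_atMost ballI OK_cmult T OK_hmult12 DD) auto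
  qed
  have C1: "OK 2 (\<lambda>h p. ?mom h k p - (?meq h k p - (h / s k) * ?th h k p))"
    if "?N + 1 \<le> k" "k \<le> J" for k
  proof (rule OK_cong[OF _ OK_cmult[OF E2[OF that(2)], of "- (1 / s k)"]])
    have sk: "0 < s k" using spos that by simp
    fix h p
    show "?mom h k p - (?meq h k p - (h / s k) * ?th h k p)
        = - (1 / s k) * (?mst h k p - ?mom h k p - h * ?th h k p)"
    proof -
      have e: "?mst h k p = (1 - s k) * ?mom h k p + s k * ?meq h k p" using MSTh that by simp
      show ?thesis unfolding e using sk by (simp add: field_simps)
    qed
  qed
  have C2: "OK 2 (\<lambda>h p. ?mst h k p - (?meq h k p - (1 / s k - 1) * h * ?th h k p))"
    if "?N + 1 \<le> k" "k \<le> J" for k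
  proof (rule OK_cong[OF _ OK_cmult[OF E2[OF that(2)], of "(1 - s k) * - (1 / s k)"]])
    have sk: "0 < s k" using spos that by simp
    fix h p
    show "?mst h k p - (?meq h k p - (1 / s k - 1) * h * ?th h k p)
        = (1 - s k) * - (1 / s k) * (?mst h k p - ?mom h k p - h * ?th h k p)"
    proof -
      have e: "?mst h k p = (1 - s k) * ?mom h k p + s k * ?meq h k p" using MSTh that by simp
      show ?thesis unfolding e using sk by (simp add: field_simps)
    qed
  qed
  have C3: "bigO 2 (\<lambda>h p. px \<beta> (?fst h j) p - (px \<beta> (?feq h j) p
                    - h * (\<Sum>k\<in>{?N+1..J}. (1 / s k - 1) * Minv j k * px \<beta> (?th h k) p)))"
    if j: "j \<le> J" for j \<beta>
  proof -
    define T3 where "T3 h p = ?fst h j p - ?feq h j p + h * (\<Sum>k\<in>{?N+1..J}. (1 / s k - 1) * Minv j k * ?th h k p)" for h p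
    have T3eq: "T3 h p = (\<Sum>k\<in>{?N+1..J}. Minv j k * ((1 - s k) * - (1 / s k) * (?mst h k p - ?mom h k p - h * ?th h k p)))" for h p
    proof -
      have "?fst h j p - ?feq h j p = (\<Sum>k\<le>J. Minv j k * (?mst h k p - ?meq h k p))"
        unfolding fstar_def FEQ[OF j] by (simp add: sum_subtractf right_diff_distrib)
      also have "\<dots> = (\<Sum>k\<in>{?N+1..J}. Minv j k * (?mst h k p - ?meq h k p))"
        by (rule sum.mono_neutral_right) (auto simp: MSTl MEQlow)
      finally have a: "?fst h j p - ?feq h j p = (\<Sum>k\<in>{?N+1..J}. Minv j k * (?mst h k p - ?meq h k p))" .
      have "T3 h p = (\<Sum>k\<in>{?N+1..J}. Minv j k * (?mst h k p - ?meq h k p + (1 / s k - 1) * h * ?th h k p))"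
      proof -
        have "T3 h p = (\<Sum>k\<in>{?N+1..J}. Minv j k * (?mst h k p - ?meq h k p) + h * ((1 / s k - 1) * Minv j k * ?th h k p))"
          unfolding T3_def a by (simp add: sum.distrib sum_distrib_left)
        also have "\<dots> = (\<Sum>k\<in>{?N+1..J}. Minv j k * (?mst h k p - ?meq h k p + (1 / s k - 1) * h * ?th h k p))"
          by (rule sum.cong) (simp_all add: algebra_simps)
        finally show ?thesis .
      qed
      also have "\<dots> = (\<Sum>k\<in>{?N+1..J}. Minv j k * ((1 - s k) * - (1 / s k) * (?mst h k p - ?mom h k p - h * ?th h k p)))"
      proof (rule sum.cong[OF refl])
        fix k assume k: "k \<in> {?N+1..J}"
        then have sk: "0 < s k" using spos by simp
        show "Minv j k * (?mst h k p - ?meq h k p + (1 / s k - 1) * h * ?th h k p)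
          = Minv j k * ((1 - s k) * - (1 / s k) * (?mst h k p - ?mom h k p - h * ?th h k p))"
        proof -
          have e: "?mst h k p = (1 - s k) * ?mom h k p + s k * ?meq h k p" using MSTh k by simp
          show ?thesis unfolding e using sk by (simp add: field_simps)
        qed
      qed
      finally show ?thesis .
    qed
    have OT3: "OK 2 T3"
    proof (rule OK_cong)
      show "T3 h p = (\<Sum>k\<in>{?N+1..J}. Minv j k * ((1 - s k) * - (1 / s k) * (?mst h k p - ?mom h k p - h * ?th h k p)))" for h p
        by (rule T3eq)
      show "OK 2 (\<lambda>h p. \<Sum>k\<in>{?N+1..J}. Minv j k * ((1 - s k) * - (1 / s k) * (?mst h k p - ?mom h k p - h * ?th h k p)))"
      proof (rule OK_sum[OF finite_atLeastAtMost], rule ballI)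
        fix k assume k: "k \<in> {?N+1..J}"
        show "OK 2 (\<lambda>h p. Minv j k * ((1 - s k) * - (1 / s k) * (?mst h k p - ?mom h k p - h * ?th h k p)))"
          using k by (intro OK_cmult E2) auto
      qed
    qed
    have OpT3: "OK 2 (\<lambda>h. px \<beta> (T3 h))" unfolding px_def by (rule OK_dirD[OF OT3 basis_x])
    show ?thesis
    proof (rule bigO_cong[OF _ OpT3[unfolded OK_def, THEN conjunct2]])
      fix h :: real and p assume h: "0 < h"
      have sfst: "smooth_fun (?fst h j)" using Ofst[OF j] h unfolding OK_def by auto
      have sfeq: "smooth_fun (?feq h j)" using smfeq[OF h j] .
      have sth: "\<forall>k\<in>{?N+1..J}. smooth_fun (\<lambda>p. (1 / s k - 1) * Minv j k * ?th h k p)"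
        using Oth h unfolding OK_def by (auto intro: smooth_cmult)
      have sS: "smooth_fun (\<lambda>p. \<Sum>k\<in>{?N+1..J}. (1 / s k - 1) * Minv j k * ?th h k p)"
        by (rule smooth_sum[OF _ sth]) simp
      have sd: "smooth_fun (\<lambda>p. ?fst h j p - ?feq h j p)" by (rule smooth_diff[OF sfst sfeq])
      have "px \<beta> (T3 h) p = px \<beta> (\<lambda>p. ?fst h j p - ?feq h j p) p
           + h * px \<beta> (\<lambda>p. \<Sum>k\<in>{?N+1..J}. (1 / s k - 1) * Minv j k * ?th h k p) p"
        unfolding T3_def[abs_def] px_def
        using dirD_add[OF sd smooth_cmult[OF sS] basis_x] dirD_cmult[OF sS basis_x] by simp
      also have "px \<beta> (\<lambda>p. ?fst h j p - ?feq h j p) p = px \<beta> (?fst h j) p - px \<beta> (?feq h j) p"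
        unfolding px_def by (rule dirD_diff[OF sfst sfeq basis_x])
      also have "px \<beta> (\<lambda>p. \<Sum>k\<in>{?N+1..J}. (1 / s k - 1) * Minv j k * ?th h k p) p
          = (\<Sum>k\<in>{?N+1..J}. dirD (axis \<beta> 1, 0) (\<lambda>p. (1 / s k - 1) * Minv j k * ?th h k p) p)"
        unfolding px_def by (rule dirD_sum[OF _ sth basis_x]) simp
      also have "\<dots> = (\<Sum>k\<in>{?N+1..J}. (1 / s k - 1) * Minv j k * px \<beta> (?th h k) p)"
        unfolding px_def
      proof (rule sum.cong[OF refl])
        fix k assume "k \<in> {?N+1..J}"
        have "smooth_fun (?th h k)" using Oth h unfolding OK_def by auto
        then show "dirD (axis \<beta> 1, 0) (\<lambda>p. (1 / s k - 1) * Minv j k * ?th h k p) p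
             = (1 / s k - 1) * Minv j k * dirD (axis \<beta> 1, 0) (?th h k) p"
          by (rule dirD_cmult[OF _ basis_x])
      qed
      finally show "px \<beta> (?fst h j) p - (px \<beta> (?feq h j) p
                    - h * (\<Sum>k\<in>{?N+1..J}. (1 / s k - 1) * Minv j k * px \<beta> (?th h k) p))
            = px \<beta> (T3 h) p" by simp
    qed
  qed
  show ?thesis
    using C1 C2 C3 unfolding OK_def by blast
qed


end
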